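(* Consider the stochastic quadratic problem in the context, run with the step decay schedule in the context with $\eta_1\le1/L$. Assume: (1) $H$ is diagonal; (2) $\mathbb{E}_\xi[n_tn_t^\top]=\sigma^2H$ for all $t$; (3) $\lambda_j(w_{0,j}-w_{*,j})^2\neq0$ for every $j=1,\dots,d$, where $\lambda_j$ is the $j$-th diagonal entry of $H$. Then the final iterate satisfies $$\mathbb{E}[f(w_{T+1})-f(w_* )]=\Omega\!\left(\frac{d\sigma^2}{T}\log T\right),$$ that is, it is bounded below by an absolute constant times $\frac{d\sigma^2}{T}\log T$ for all sufficiently large $T$.
   Context: Let $\xi$ be a random data sample, $H(\xi)\in\mathbb{R}^{d\times d}$ a random symmetric matrix and $b(\xi)\in\mathbb{R}^d$ a random vector. Define $f(w,\xi)=\frac12w^\top H(\xi)w-b(\xi)^\top w$ and $f(w)=\mathbb{E}_\xi f(w,\xi)$. Set $H=\mathbb{E}H(\xi)$, assumed positive definite, and $b=\mathbb{E}b(\xi)$, with $w_*=H^{-1}b$. Let $\mu=\lambda_{\min}(H)$ and $L=\lambda_{\max}(H)$. The noise at step $t$ is $n_t=(Hw_t-b)-(H(\xi_t)w_t-b(\xi_t))$, with $\xi_t$ i.i.d. copies of $\xi$. Step decay schedule (Ge et al. 2019). Here $\log$ denotes $\log_2$, and $T$ is such that $\log T$ and $T/\log T$ are integers. For $\ell=0,1,\dots,\log T-1$, $$\eta_t=\eta_1/2^\ell\quad\text{for }t\in\left[1+\ell\tfrac{T}{\log T},\,(\ell+1)\tfrac{T}{\log T}\right].$$ Starting from a deterministic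 $w_0$, SGD performs $w_{t+1}=w_t-\eta_t(H(\xi_t)w_t-b(\xi_t))$ for $t=1,\dots,T$, with $\eta_0=0$ (equivalently $w_1=w_0$). The final iterate is $w_{T+1}$. *)

theory Defs
  imports "HOL-Probability.Probability" "Jordan_Normal_Form.Char_Poly"
begin

definition H_mean :: "'s measure \<Rightarrow> ('s \<Rightarrow> real mat) \<Rightarrow> nat \<Rightarrow> real mat" where
  "H_mean P Hs d = mat d d (\<lambda>(i,j). \<integral>\<xi>. Hs \<xi> $$ (i,j) \<partial>P)"

definition b_mean :: "'s measure \<Rightarrow> ('s \<Rightarrow> real vec) \<Rightarrow> nat \<Rightarrow> real vec" where
  "b_mean P bs d = vec d (\<lambda>i. \<integral>\<xi>. bs \<xi> $ i \<partial>P)"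

definition fobj :: "real mat \<Rightarrow> real vec \<Rightarrow> real vec \<Rightarrow> real" where
  "fobj Hm bm w = 1/2 * scalar_prod w (Hm *\<^sub>v w) - scalar_prod bm w"

definition pos_def_mat :: "nat \<Rightarrow> real mat \<Rightarrow> bool" where
  "pos_def_mat d A \<longleftrightarrow> A \<in> carrier_mat d d \<and>
     (\<forall>v \<in> carrier_vec d. v \<noteq> 0\<^sub>v d \<longrightarrow> scalar_prod v (A *\<^sub>v v) > 0)"

definition symmetric_mat :: "real mat \<Rightarrow> bool" where
  "symmetric_mat A \<longleftrightarrow> A\<^sup>T = A"

definition lambda_max :: "real mat \<Rightarrow> real" where
  "lambda_max A = Max {k. eigenvalue A k}"

definition wstar :: "nat \<Rightarrow> real mat \<Rightarrow> real vec \<Rightarrow> real vec" where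
  "wstar d Hm bm = (THE w. w \<in> carrier_vec d \<and> Hm *\<^sub>v w = bm)"

text \<open>Step decay schedule with T = 2^k (so log_2 T = k): eta_0 = 0 and, for
  t in [1 + l T/k, (l+1) T/k], eta_t = eta_1 / 2^l.\<close>
definition step_decay :: "real \<Rightarrow> nat \<Rightarrow> nat \<Rightarrow> nat \<Rightarrow> real" where
  "step_decay eta1 T k t = (if t = 0 then 0 else eta1 / 2 ^ ((t - 1) div (T div k)))"

text \<open>SGD iterates along a sample path om (om t = xi_t):
  w_0 given, w_{t+1} = w_t - eta_t (H(xi_t) w_t - b(xi_t)).  Since eta_0 = 0, w_1 = w_0.\<close>
primrec sgd :: "('s \<Rightarrow> real mat) \<Rightarrow> ('s \<Rightarrow> real vec) \<Rightarrow> (nat \<Rightarrow> real) \<Rightarrow> real vec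
                \<Rightarrow> nat \<Rightarrow> (nat \<Rightarrow> 's) \<Rightarrow> real vec" where
  "sgd Hs bs eta w0 0 om = w0"
| "sgd Hs bs eta w0 (Suc t) om =
     sgd Hs bs eta w0 t om - eta t \<cdot>\<^sub>v (Hs (om t) *\<^sub>v sgd Hs bs eta w0 t om - bs (om t))"

definition noise :: "real mat \<Rightarrow> real vec \<Rightarrow> ('s \<Rightarrow> real mat) \<Rightarrow> ('s \<Rightarrow> real vec)
                     \<Rightarrow> real vec \<Rightarrow> 's \<Rightarrow> real vec" where
  "noise Hm bm Hs bs w \<xi> = (Hm *\<^sub>v w - bm) - (Hs \<xi> *\<^sub>v w - bs \<xi>)"

end

theory Submission
  imports Defs
begin


lemma phase_exact:
  fixes v h :: "nat \<Rightarrow> real"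
  assumes rec: "\<And>t. v (Suc t) = (1 - h t)\<^sup>2 * v t + s * (h t)\<^sup>2"
    and hx: "\<And>i. i < n \<Longrightarrow> h (p + i) = x"
  shows "v (p + n) = ((1-x)\<^sup>2)^n * v p + s * x\<^sup>2 * (\<Sum>i<n. ((1-x)\<^sup>2)^i)"
  using hx
proof (induction n)
  case 0 then show ?case by simp
next
  case (Suc n)
  have IH: "v (p + n) = ((1-x)\<^sup>2)^n * v p + s * x\<^sup>2 * (\<Sum>i<n. ((1-x)\<^sup>2)^i)" using Suc by simp
  have "h (p+n) = x" using Suc.prems by simp
  then have "v (p + Suc n) = (1-x)\<^sup>2 * v (p+n) + s * x\<^sup>2" using rec[of "p+n"] by simp
  also have "\<dots> = ((1-x)\<^sup>2)^Suc n * v p + s*x\<^sup>2 * (1 + (1-x)\<^sup>2 * (\<Sum>i<n. ((1-x)\<^sup>2)^i))"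
    unfolding IH by (simp add: algebra_simps)
  also have "(1 + (1-x)\<^sup>2 * (\<Sum>i<n. ((1-x)\<^sup>2)^i)) = (\<Sum>i<Suc n. ((1-x)\<^sup>2)^i)"
    by (subst sum.lessThan_Suc_shift) (simp add: sum_distrib_left)
  finally show ?case .
qed

lemma rec_nonneg:
  fixes v h :: "nat \<Rightarrow> real"
  assumes rec: "\<And>t. v (Suc t) = (1 - h t)\<^sup>2 * v t + s * (h t)\<^sup>2"
    and "v 0 \<ge> 0" "s \<ge> 0"
  shows "v t \<ge> 0"
  by (induction t) (use assms in auto)

lemma gain:
  fixes x :: real and n :: nat
  assumes x: "0 < x" "x \<le> 1/2" and nx: "real n * x \<ge> 1"
  shows "x\<^sup>2 * (\<Sum>i<n. ((1-x)\<^sup>2)^i) \<ge> x / 4"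
proof -
  let ?q = "(1-x)\<^sup>2"
  have b: "1 + real n * x \<le> (1 + x) ^ n" using Bernoulli_inequality[of x n] x by simp
  have "(1-x)^n * (1+x)^n = ((1-x) * (1+x))^n" by (rule power_mult_distrib[symmetric])
  also have "(1-x) * (1+x) = 1 - x\<^sup>2" by (simp add: power2_eq_square algebra_simps)
  also have "(1 - x\<^sup>2)^n \<le> 1"
  proof (rule power_le_one)
    have "x\<^sup>2 \<le> 1" using x by (simp add: power2_eq_square) (intro mult_le_one, auto)
    then show "0 \<le> 1 - x\<^sup>2" by simp
    show "1 - x\<^sup>2 \<le> 1" by simp
  qed
  finally have p1: "(1-x)^n * (1+x)^n \<le> 1" .
  have r0: "0 \<le> (1-x)^n" using x by simp
  have "(1-x)^n * (1 + real n * x) \<le> (1-x)^n * (1+x)^n"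
    using b r0 by (rule mult_left_mono)
  then have "(1-x)^n * (1 + real n * x) \<le> 1" using p1 by linarith
  moreover have "(1-x)^n * 2 \<le> (1-x)^n * (1 + real n * x)" using nx r0 by (intro mult_left_mono) auto
  ultimately have r2: "(1-x)^n * 2 \<le> 1" by linarith
  have r1: "(1-x)^n \<le> 1" using x by (intro power_le_one) auto
  have "?q^n = ((1-x)^n)\<^sup>2" by (simp add: power_mult[symmetric] mult.commute)
  also have "\<dots> = (1-x)^n * (1-x)^n" by (simp add: power2_eq_square)
  also have "\<dots> \<le> (1-x)^n * 1" using r1 r0 by (rule mult_left_mono)
  finally have qn: "?q^n \<le> 1/2" using r2 by linarith
  have eq: "1 - ?q^n = (1 - ?q) * (\<Sum>i<n. ?q^i)" by (rule one_diff_power_eq)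
  have xx: "x * x \<le> x * (1/2)" using x by (intro mult_left_mono) auto
  have qe: "1 - ?q = 2 * x - x * x" by (simp add: power2_eq_square algebra_simps)
  have q1: "0 < 1 - ?q" "1 - ?q \<le> 2 * x" using x xx qe by (auto simp: mult_nonneg_nonneg)
  have S: "(\<Sum>i<n. ?q^i) \<ge> 0" by (intro sum_nonneg) auto
  have "1/2 \<le> (1 - ?q) * (\<Sum>i<n. ?q^i)" using eq qn by linarith
  also have "\<dots> \<le> 2 * x * (\<Sum>i<n. ?q^i)" using q1 S by (intro mult_right_mono) auto
  finally have "1/2 \<le> 2 * x * (\<Sum>i<n. ?q^i)" .
  then have "x/2 * (1/2) \<le> x/2 * (2 * x * (\<Sum>i<n. ?q^i))" using x by (intro mult_left_mono) auto
  then have "x/4 \<le> x * (x * (\<Sum>i<n. ?q^i))" by (simp add: algebra_simps)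
  then show ?thesis by (simp add: power2_eq_square algebra_simps)
qed

lemma decay:
  fixes x :: real and n :: nat
  assumes x: "0 \<le> x" "x \<le> 1/2"
  shows "((1-x)\<^sup>2)^n \<ge> exp (- 4 * real n * x)"
proof -
  have l1: "- x - 2 * x\<^sup>2 \<le> ln (1 - x)" by (rule ln_one_minus_pos_lower_bound[OF x])
  have "x * (2*x) \<le> x * 1" using x by (intro mult_left_mono) auto
  then have "x\<^sup>2 \<le> x / 2" by (simp add: power2_eq_square)
  then have l: "-2 * x \<le> ln (1-x)" using l1 by linarith
  have "exp (-4 * x) \<le> exp (2 * ln (1-x))" using l by (simp only: exp_le_cancel_iff)
  also have "exp (2 * ln (1-x)) = exp (ln (1-x)) * exp (ln (1-x))" by (simp only: mult_2 exp_add)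
  also have "exp (ln (1-x)) = 1 - x" by (rule exp_ln) (use x in simp)
  finally have "exp (-4*x) \<le> (1-x)\<^sup>2" by (simp only: power2_eq_square)
  then have A: "exp (-4*x)^n \<le> ((1-x)\<^sup>2)^n" by (intro power_mono) auto
  have "- 4 * real n * x = real n * (-4*x)" by simp
  then have e: "exp (- 4 * real n * x) = exp (-4*x)^n" by (simp only: exp_of_nat_mult)
  show ?thesis using A e by linarith
qed

lemma cross_exists:
  fixes f :: "nat \<Rightarrow> real"
  assumes "f 0 \<ge> 1" "f n < 1"
  shows "\<exists>l<n. f l \<ge> 1 \<and> f (Suc l) < 1"
  using assms(2)
proof (induction n)
  case 0 then show ?case using assms(1) by simp
next
  case (Suc n)
  show ?case
  proof (cases "f n < 1")
    case True then show ?thesis using Suc.IH by (meson less_SucI)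
  next
    case False then show ?thesis using Suc.prems by auto
  qed
qed

lemma coord_lower:
  fixes v h :: "nat \<Rightarrow> real" and a s :: real and k m :: nat
  assumes rec: "\<And>t. v (Suc t) = (1 - h t)\<^sup>2 * v t + s * (h t)\<^sup>2"
   and v0: "v 0 \<ge> 0" and s: "s \<ge> 0" and a: "a > 0"
   and hdef: "\<And>l i. l < k \<Longrightarrow> i < m \<Longrightarrow> h (l*m + 1 + i) = a / 2^l"
   and m4: "m \<ge> 4" and am: "a * m \<ge> 1" and k1: "k \<ge> 1" and amk: "real m * a < 2^(k-1)"
  shows "v (k*m+1) \<ge> exp (-8) * s / (4 * m)"
proof -
  have vnn: "\<And>t. v t \<ge> 0" using rec_nonneg[OF rec v0 s] .
  define f where "f l = real m * a / 2^l" for l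
  have "f 0 \<ge> 1" using am by (simp add: f_def mult.commute)
  moreover have "f (k-1) < 1" using amk by (simp add: f_def)
  ultimately obtain l where l: "l < k-1" "f l \<ge> 1" "f (Suc l) < 1" using cross_exists by blast
  define x where "x = a / 2^l"
  have mpos: "real m > 0" using m4 by simp
  have m4r: "real m \<ge> 4" using m4 by simp
  have xm: "real m * x \<ge> 1" using l(2) by (simp add: f_def x_def)
  have x2: "f (Suc l) = real m * x / 2" by (simp add: f_def x_def)
  have xpos: "x > 0" using a by (simp add: x_def)
  have mx2: "real m * x < 2" using l(3) x2 by simp
  have xle: "x \<le> 1/2"
  proof (rule ccontr)
    assume "\<not> x \<le> 1/2"
    then have "real m * (1/2) \<le> real m * x" using mpos by (intro mult_left_mono) auto
    then show False using mx2 m4r by linarith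
  qed
  have ph: "v (l*m+1 + m) = ((1-x)\<^sup>2)^m * v (l*m+1) + s * x\<^sup>2 * (\<Sum>i<m. ((1-x)\<^sup>2)^i)"
    by (rule phase_exact[where v=v and h=h, OF rec]) (use hdef l in \<open>simp add: x_def\<close>)
  have g: "x\<^sup>2 * (\<Sum>i<m. ((1-x)\<^sup>2)^i) \<ge> x/4" by (rule gain[OF xpos xle]) (use xm in \<open>simp add: mult.commute\<close>)
  have G0: "v (Suc l * m + 1) \<ge> s * (x/4)"
  proof -
    have "((1-x)\<^sup>2)^m * v (l*m+1) \<ge> 0" using vnn by simp
    moreover have "s * (x\<^sup>2 * (\<Sum>i<m. ((1-x)\<^sup>2)^i)) \<ge> s * (x/4)" using g s by (rule mult_left_mono)
    moreover have "Suc l * m + 1 = l*m+1 + m" by simp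
    ultimately show ?thesis using ph by (simp add: algebra_simps)
  qed
  have "x/4 \<ge> 1/(4*m)" using xm mpos by (simp add: field_simps)
  then have "s * (x/4) \<ge> s * (1/(4*m))" using s by (rule mult_left_mono)
  then have G: "v (Suc l * m + 1) \<ge> s / (4*m)" using G0 by simp
  have D: "v ((Suc l + j) * m + 1) \<ge> exp (- 8 * real m * a * (1/2^(Suc l) - 1/2^(Suc l + j))) * v (Suc l * m + 1)"
    if "Suc l + j \<le> k" for j
    using that
  proof (induction j)
    case 0 show ?case by simp
  next
    case (Suc j)
    define L where "L = Suc l + j"
    have L: "L < k" using Suc.prems by (simp add: L_def)
    define y where "y = a / 2^L"
    have ypos: "y \<ge> 0" using a by (simp add: y_def)
    have "(2::real)^l \<le> 2^L" by (intro power_increasing) (auto simp: L_def)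
    then have "y \<le> x" using a by (simp add: y_def x_def frac_le)
    then have yle: "y \<le> 1/2" using xle by simp
    have ph2: "v (L*m+1 + m) = ((1-y)\<^sup>2)^m * v (L*m+1) + s * y\<^sup>2 * (\<Sum>i<m. ((1-y)\<^sup>2)^i)"
      by (rule phase_exact[where v=v and h=h, OF rec]) (use hdef L in \<open>simp add: y_def\<close>)
    have "s * y\<^sup>2 * (\<Sum>i<m. ((1-y)\<^sup>2)^i) \<ge> 0" using s by (intro mult_nonneg_nonneg sum_nonneg) auto
    then have f1: "v (L*m+1 + m) \<ge> ((1-y)\<^sup>2)^m * v (L*m+1)" using ph2 by linarith
    have f2: "((1-y)\<^sup>2)^m * v (L*m+1) \<ge> exp (-4 * real m * y) * v (L*m+1)"
      using decay[OF ypos yle, of m] vnn by (intro mult_right_mono) auto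
    have f3: "exp (-4 * real m * y) * v (L*m+1) \<ge> exp (-4 * real m * y) *
        (exp (- 8 * real m * a * (1/2^(Suc l) - 1/2^L)) * v (Suc l * m + 1))"
      using Suc.IH Suc.prems by (intro mult_left_mono) (auto simp: L_def)
    have eq: "exp (-4 * real m * y) * exp (- 8 * real m * a * (1/2^(Suc l) - 1/2^L))
        = exp (- 8 * real m * a * (1/2^(Suc l) - 1/2^(Suc L)))"
      by (simp add: exp_add[symmetric] y_def field_simps)
    have "v (L*m+1 + m) \<ge> exp (-4 * real m * y) *
        (exp (- 8 * real m * a * (1/2^(Suc l) - 1/2^L)) * v (Suc l * m + 1))" using f1 f2 f3 by linarith
    also have "exp (-4 * real m * y) *
        (exp (- 8 * real m * a * (1/2^(Suc l) - 1/2^L)) * v (Suc l * m + 1))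
       = exp (- 8 * real m * a * (1/2^(Suc l) - 1/2^(Suc L))) * v (Suc l * m + 1)"
      using eq by (metis mult.assoc)
    finally have "exp (- 8 * real m * a * (1/2^(Suc l) - 1/2^(Suc L))) * v (Suc l * m + 1) \<le> v (L*m+1 + m)" .
    moreover have e1: "Suc L * m + 1 = L*m+1 + m" by simp
    moreover have e2: "Suc l + Suc j = Suc L" by (simp add: L_def)
    ultimately show ?case by (simp only: e2 e1)
  qed
  have kk: "Suc l + (k - Suc l) = k" using l by simp
  have D1: "v (k * m + 1) \<ge> exp (- 8 * real m * a * (1/2^(Suc l) - 1/2^k)) * v (Suc l * m + 1)"
    using D[of "k - Suc l"] kk by simp
  have "real m * a * (1/2^(Suc l) - 1/2^k) \<le> real m * a * (1/2^(Suc l))"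
    using mpos a by (intro mult_left_mono) auto
  also have "\<dots> = f (Suc l)" by (simp add: f_def)
  finally have "real m * a * (1/2^(Suc l) - 1/2^k) \<le> 1" using l(3) by linarith
  then have "exp (-8) \<le> exp (- 8 * real m * a * (1/2^(Suc l) - 1/2^k))" by simp
  then have "exp (-8) * (s / (4*m)) \<le> exp (- 8 * real m * a * (1/2^(Suc l) - 1/2^k)) * v (Suc l * m + 1)"
    using G s mpos by (intro mult_mono) auto
  then show ?thesis using D1 by simp
qed




definition sqint :: "'s measure \<Rightarrow> ('s \<Rightarrow> real) \<Rightarrow> bool" where
  "sqint M f \<longleftrightarrow> f \<in> borel_measurable M \<and> integrable M (\<lambda>x. (f x)\<^sup>2)"

lemma sqint_const: "prob_space M \<Longrightarrow> sqint M (\<lambda>x. c)"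
  unfolding sqint_def by (auto intro: finite_measure.integrable_const prob_space.finite_measure)

lemma sqint_add:
  assumes "sqint M f" "sqint M g" shows "sqint M (\<lambda>x. f x + g x)"
proof -
  have m: "(\<lambda>x. f x + g x) \<in> borel_measurable M" using assms by (auto simp: sqint_def)
  have i: "integrable M (\<lambda>x. 2 * (f x)\<^sup>2 + 2 * (g x)\<^sup>2)" using assms by (auto simp: sqint_def)
  have "integrable M (\<lambda>x. (f x + g x)\<^sup>2)"
  proof (rule Bochner_Integration.integrable_bound[OF i])
    show "(\<lambda>x. (f x + g x)\<^sup>2) \<in> borel_measurable M" using m by measurable
    show "AE x in M. norm ((f x + g x)\<^sup>2) \<le> norm (2 * (f x)\<^sup>2 + 2 * (g x)\<^sup>2)"
    proof (intro AE_I2)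
      fix x
      have "0 \<le> (f x - g x)\<^sup>2" by simp
      then have "(f x + g x)\<^sup>2 \<le> 2 * (f x)\<^sup>2 + 2 * (g x)\<^sup>2" by (simp add: power2_eq_square algebra_simps)
      moreover have "0 \<le> 2 * (f x)\<^sup>2 + 2 * (g x)\<^sup>2" by simp
      ultimately show "norm ((f x + g x)\<^sup>2) \<le> norm (2 * (f x)\<^sup>2 + 2 * (g x)\<^sup>2)" by simp
    qed
  qed
  then show ?thesis using m by (simp add: sqint_def)
qed

lemma sqint_cmult:
  assumes "sqint M f" shows "sqint M (\<lambda>x. c * f x)"
  using assms by (auto simp: sqint_def power_mult_distrib)

lemma sqint_neg:
  assumes "sqint M f" shows "sqint M (\<lambda>x. - f x)"
  using sqint_cmult[OF assms, of "-1"] by simp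

lemma sqint_diff:
  assumes "sqint M f" "sqint M g" shows "sqint M (\<lambda>x. f x - g x)"
  using sqint_add[OF assms(1) sqint_neg[OF assms(2)]] by simp

lemma sqint_sum:
  assumes "prob_space M" "\<And>i. i \<in> S \<Longrightarrow> sqint M (f i)" shows "sqint M (\<lambda>x. \<Sum>i\<in>S. f i x)"
  using assms(2)
proof (induction S rule: infinite_finite_induct)
  case (infinite S) then show ?case using sqint_const[OF assms(1)] by simp
next
  case empty then show ?case using sqint_const[OF assms(1)] by simp
next
  case (insert i S) then show ?case by (simp add: sqint_add)
qed

lemma sqint_mult_integrable:
  assumes "sqint M f" "sqint M g" shows "integrable M (\<lambda>x. f x * g x)"
proof (rule Bochner_Integration.integrable_bound)
  show "integrable M (\<lambda>x. (f x)\<^sup>2 + (g x)\<^sup>2)" using assms by (auto simp: sqint_def)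
  show "(\<lambda>x. f x * g x) \<in> borel_measurable M" using assms by (auto simp: sqint_def)
  show "AE x in M. norm (f x * g x) \<le> norm ((f x)\<^sup>2 + (g x)\<^sup>2)"
  proof (intro AE_I2)
    fix x
    have "0 \<le> (\<bar>f x\<bar> - \<bar>g x\<bar>)\<^sup>2" by simp
    then have "2 * \<bar>f x\<bar> * \<bar>g x\<bar> \<le> \<bar>f x\<bar>\<^sup>2 + \<bar>g x\<bar>\<^sup>2" by (simp add: power2_eq_square algebra_simps)
    then have "2 * \<bar>f x\<bar> * \<bar>g x\<bar> \<le> (f x)\<^sup>2 + (g x)\<^sup>2" by simp
    then show "norm (f x * g x) \<le> norm ((f x)\<^sup>2 + (g x)\<^sup>2)"
    proof -
      have "norm (f x * g x) = \<bar>f x\<bar> * \<bar>g x\<bar>" by (simp add: abs_mult)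
      moreover have "norm ((f x)\<^sup>2 + (g x)\<^sup>2) = (f x)\<^sup>2 + (g x)\<^sup>2" by simp
      moreover have "\<bar>f x\<bar> * \<bar>g x\<bar> \<ge> 0" by simp
      ultimately show ?thesis using \<open>2 * \<bar>f x\<bar> * \<bar>g x\<bar> \<le> (f x)\<^sup>2 + (g x)\<^sup>2\<close> by linarith
    qed
  qed
qed

lemma sqint_integrable:
  assumes "prob_space M" "sqint M f" shows "integrable M f"
  using sqint_mult_integrable[OF assms(2) sqint_const[OF assms(1), of 1]] by simp

primrec uu :: "(nat \<Rightarrow> real) \<Rightarrow> real \<Rightarrow> real \<Rightarrow> real \<Rightarrow> nat \<Rightarrow> real" where
  "uu eta l s e0 0 = e0"
| "uu eta l s e0 (Suc t) = (1 - eta t * l)\<^sup>2 * uu eta l s e0 t + (eta t)\<^sup>2 * s * l"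

lemma uu_nonneg: "e0 \<ge> 0 \<Longrightarrow> s \<ge> 0 \<Longrightarrow> l \<ge> 0 \<Longrightarrow> uu eta l s e0 t \<ge> 0"
  by (induction t) auto

locale sgdloc =
  fixes d :: nat and P :: "'s measure" and Hs :: "'s \<Rightarrow> real mat" and bs :: "'s \<Rightarrow> real vec"
    and w0 :: "real vec" and \<sigma> :: real
  assumes P: "prob_space P"
  and Hcar: "\<And>\<xi>. \<xi> \<in> space P \<Longrightarrow> Hs \<xi> \<in> carrier_mat d d"
  and bcar: "\<And>\<xi>. \<xi> \<in> space P \<Longrightarrow> bs \<xi> \<in> carrier_vec d"
  and Hmeas: "\<And>i j. i<d \<Longrightarrow> j<d \<Longrightarrow> (\<lambda>\<xi>. Hs \<xi> $$ (i,j)) \<in> borel_measurable P"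
  and Hint: "\<And>i j. i<d \<Longrightarrow> j<d \<Longrightarrow> integrable P (\<lambda>\<xi>. (Hs \<xi> $$ (i,j))\<^sup>2)"
  and bmeas: "\<And>i. i<d \<Longrightarrow> (\<lambda>\<xi>. bs \<xi> $ i) \<in> borel_measurable P"
  and bint: "\<And>i. i<d \<Longrightarrow> integrable P (\<lambda>\<xi>. (bs \<xi> $ i)\<^sup>2)"
  and w0: "w0 \<in> carrier_vec d"
  and pd: "pos_def_mat d (H_mean P Hs d)"
  and diag: "diagonal_mat (H_mean P Hs d)"
begin

abbreviation "Hm \<equiv> H_mean P Hs d"
abbreviation "bm \<equiv> b_mean P bs d"
abbreviation "ws \<equiv> wstar d Hm bm"
abbreviation "lam j \<equiv> Hm $$ (j,j)"
abbreviation "PP \<equiv> PiM UNIV (\<lambda>_::nat. P)"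

lemma Hm_car: "Hm \<in> carrier_mat d d" by (simp add: H_mean_def)
lemma Hm_idx: "i<d \<Longrightarrow> j<d \<Longrightarrow> Hm $$ (i,j) = (\<integral>\<xi>. Hs \<xi> $$ (i,j) \<partial>P)" by (simp add: H_mean_def)
lemma Hm_off: "i<d \<Longrightarrow> j<d \<Longrightarrow> i \<noteq> j \<Longrightarrow> Hm $$ (i,j) = 0"
  using diag Hm_car unfolding diagonal_mat_def by auto
lemma bm_idx: "i<d \<Longrightarrow> bm $ i = (\<integral>\<xi>. bs \<xi> $ i \<partial>P)" by (simp add: b_mean_def)
lemma bm_dim: "dim_vec bm = d" by (simp add: b_mean_def)

lemma sum_diag:
  assumes "j < d" shows "(\<Sum>l\<in>{0..<d}. Hm $$ (j,l) * f l) = lam j * f j"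
proof -
  have "(\<Sum>l\<in>{0..<d}. Hm $$ (j,l) * f l) = (\<Sum>l\<in>{0..<d}. if l = j then lam j * f j else 0)"
    using Hm_off assms by (intro sum.cong) auto
  also have "\<dots> = lam j * f j" using assms by simp
  finally show ?thesis .
qed

lemma mult_row: "w \<in> carrier_vec d \<Longrightarrow> j < d \<Longrightarrow> (Hm *\<^sub>v w) $ j = (\<Sum>l\<in>{0..<d}. Hm $$ (j,l) * w $ l)"
  using Hm_car by (simp add: scalar_prod_def)

lemma mult_diag: "w \<in> carrier_vec d \<Longrightarrow> j < d \<Longrightarrow> (Hm *\<^sub>v w) $ j = lam j * w $ j"
  using mult_row sum_diag by simp

lemma lam_pos: assumes j: "j < d" shows "lam j > 0"
proof -
  let ?v = "unit_vec d j"
  have vc: "?v \<in> carrier_vec d" by simp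
  have "?v \<noteq> 0\<^sub>v d" using j by (metis index_unit_vec(2) index_zero_vec(1) zero_neq_one)
  then have "0 < ?v \<bullet> (Hm *\<^sub>v ?v)" using pd vc unfolding pos_def_mat_def by blast
  also have "?v \<bullet> (Hm *\<^sub>v ?v) = (\<Sum>l\<in>{0..<d}. ?v $ l * (lam l * ?v $ l))"
    using Hm_car mult_diag[OF vc] by (simp add: scalar_prod_def)
  also have "\<dots> = (\<Sum>l\<in>{0..<d}. if l = j then lam j else 0)"
    using j by (intro sum.cong) auto
  also have "\<dots> = lam j" using j by simp
  finally show ?thesis .
qed

lemma ws_props: "ws \<in> carrier_vec d \<and> (\<forall>j<d. bm $ j = lam j * ws $ j)"
proof -
  define v where "v = vec d (\<lambda>j. bm $ j / lam j)"
  have vc: "v \<in> carrier_vec d" by (simp add: v_def)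
  have sol: "Hm *\<^sub>v v = bm"
  proof (rule eq_vecI)
    show "dim_vec (Hm *\<^sub>v v) = dim_vec bm" using Hm_car bm_dim by simp
    fix j assume "j < dim_vec bm"
    then have j: "j < d" using bm_dim by simp
    show "(Hm *\<^sub>v v) $ j = bm $ j" using mult_diag[OF vc j] lam_pos[OF j] j by (simp add: v_def)
  qed
  have uniq: "w = v" if "w \<in> carrier_vec d \<and> Hm *\<^sub>v w = bm" for w
  proof (rule eq_vecI)
    show "dim_vec w = dim_vec v" using that vc by simp
    fix j assume "j < dim_vec v"
    then have j: "j < d" using vc by simp
    have "lam j * w $ j = bm $ j" using mult_diag[of w j] that j by simp
    then show "w $ j = v $ j" using lam_pos[OF j] j by (simp add: v_def field_simps)
  qed
  have "ws = v" unfolding wstar_def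
  proof (rule the_equality)
    show "v \<in> carrier_vec d \<and> Hm *\<^sub>v v = bm" using vc sol by blast
    show "\<And>w. w \<in> carrier_vec d \<and> Hm *\<^sub>v w = bm \<Longrightarrow> w = v" by (rule uniq)
  qed
  have bv: "bm $ j = lam j * v $ j" if "j<d" for j
  proof -
    have "bm $ j = (Hm *\<^sub>v v) $ j" using sol by simp
    also have "\<dots> = lam j * v $ j" by (rule mult_diag[OF vc that])
    finally show ?thesis .
  qed
  show ?thesis using vc bv \<open>ws = v\<close> by simp
qed

lemma ws_car: "ws \<in> carrier_vec d" using ws_props by blast
lemma bm_ws: "j < d \<Longrightarrow> bm $ j = lam j * ws $ j" using ws_props by blast

lemma fobj_diff:
  assumes w: "w \<in> carrier_vec d"
  shows "fobj Hm bm w - fobj Hm bm ws = (\<Sum>j<d. lam j * (w $ j - ws $ j)\<^sup>2) / 2"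
proof -
  have f: "fobj Hm bm u = (\<Sum>j<d. u $ j * (lam j * u $ j)) / 2 - (\<Sum>j<d. lam j * ws $ j * u $ j)"
    if u: "u \<in> carrier_vec d" for u
    using u Hm_car mult_diag[OF u] bm_ws
    by (simp add: fobj_def scalar_prod_def atLeast0LessThan)
  have e: "lam j * (w $ j - ws $ j)\<^sup>2 = w $ j * (lam j * w $ j) - 2 * (lam j * ws $ j * w $ j) + ws $ j * (lam j * ws $ j)" for j
    by (simp add: power2_eq_square algebra_simps)
  have s1: "(\<Sum>j<d. lam j * (w $ j - ws $ j)\<^sup>2) = (\<Sum>j<d. w $ j * (lam j * w $ j)) - 2 * (\<Sum>j<d. lam j * ws $ j * w $ j) + (\<Sum>j<d. ws $ j * (lam j * ws $ j))"
    unfolding e by (simp add: sum.distrib sum_subtractf sum_distrib_left)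
  have s2: "(\<Sum>j<d. lam j * ws $ j * ws $ j) = (\<Sum>j<d. ws $ j * (lam j * ws $ j))"
    by (intro sum.cong) auto
  show ?thesis unfolding f[OF w] f[OF ws_car] s1 using s2 by simp
qed

lemma PPspace: "om \<in> space PP \<Longrightarrow> om t \<in> space P" by (auto simp: space_PiM)

lemma W_car: assumes om: "om \<in> space PP" shows "sgd Hs bs eta w0 t om \<in> carrier_vec d"
proof (induction t)
  case 0 then show ?case using w0 by simp
next
  case (Suc t)
  have H: "Hs (om t) \<in> carrier_mat d d" using Hcar PPspace[OF om] .
  have b: "bs (om t) \<in> carrier_vec d" using bcar PPspace[OF om] .
  have "Hs (om t) *\<^sub>v sgd Hs bs eta w0 t om - bs (om t) \<in> carrier_vec d"
    using mult_mat_vec_carrier[OF H Suc] b by (rule minus_carrier_vec)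
  then show ?case using Suc by simp
qed

lemma W_step:
  assumes om: "om \<in> space PP" and j: "j < d"
  shows "sgd Hs bs eta w0 (Suc t) om $ j = sgd Hs bs eta w0 t om $ j
          - eta t * ((\<Sum>l\<in>{0..<d}. Hs (om t) $$ (j,l) * sgd Hs bs eta w0 t om $ l) - bs (om t) $ j)"
proof -
  have c: "sgd Hs bs eta w0 t om \<in> carrier_vec d" using W_car[OF om] .
  have H: "Hs (om t) \<in> carrier_mat d d" using Hcar PPspace[OF om] .
  have b: "bs (om t) \<in> carrier_vec d" using bcar PPspace[OF om] .
  show ?thesis using c H b j by (simp add: scalar_prod_def)
qed

lemma Hs_meas_PP: "i < d \<Longrightarrow> j < d \<Longrightarrow> (\<lambda>om. Hs (om t) $$ (i,j)) \<in> borel_measurable PP"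
  using measurable_compose[OF measurable_component_singleton[of t UNIV "\<lambda>_. P"] Hmeas] by simp

lemma bs_meas_PP: "i < d \<Longrightarrow> (\<lambda>om. bs (om t) $ i) \<in> borel_measurable PP"
  using measurable_compose[OF measurable_component_singleton[of t UNIV "\<lambda>_. P"] bmeas] by simp

lemma W_meas: "j < d \<Longrightarrow> (\<lambda>om. sgd Hs bs eta w0 t om $ j) \<in> borel_measurable PP"
proof (induction t arbitrary: j)
  case 0 then show ?case by simp
next
  case (Suc t)
  have "(\<lambda>om. sgd Hs bs eta w0 t om $ j
          - eta t * ((\<Sum>l\<in>{0..<d}. Hs (om t) $$ (j,l) * sgd Hs bs eta w0 t om $ l) - bs (om t) $ j))
        \<in> borel_measurable PP"
    using Suc Hs_meas_PP bs_meas_PP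
    by (intro borel_measurable_diff borel_measurable_times borel_measurable_const borel_measurable_sum) auto
  then show ?case using W_step[OF _ Suc.prems] by (subst measurable_cong) auto
qed

lemma W_local: "t \<le> s \<Longrightarrow> sgd Hs bs eta w0 t (om(s := y)) = sgd Hs bs eta w0 t om"
  by (induction t) auto

lemma PP_prob: "prob_space PP" by (rule prob_space_PiM) (simp add: P)

lemma upd_meas: "(\<lambda>(x, X). X(t := x)) \<in> (P \<Otimes>\<^sub>M PP) \<rightarrow>\<^sub>M PP"
proof -
  define F where "F i z = (if i = t then fst z else snd z i)" for i and z :: "'s \<times> (nat \<Rightarrow> 's)"
  have eq: "(\<lambda>(x, X). X(t := x)) = (\<lambda>z i. F i z)" by (auto simp: F_def fun_eq_iff)
  have "(\<lambda>z i. F i z) \<in> (P \<Otimes>\<^sub>M PP) \<rightarrow>\<^sub>M PP"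
  proof (rule measurable_PiM_single')
    fix i :: nat
    show "F i \<in> (P \<Otimes>\<^sub>M PP) \<rightarrow>\<^sub>M P"
    proof (cases "i = t")
      case True
      then have "F i = fst" by (auto simp: F_def fun_eq_iff)
      then show ?thesis by simp
    next
      case False
      then have "F i = (\<lambda>z. snd z i)" by (auto simp: F_def fun_eq_iff)
      then show ?thesis
        using measurable_compose[OF measurable_snd measurable_component_singleton[of i UNIV "\<lambda>_. P"]] by simp
    qed
  next
    show "(\<lambda>z i. F i z) \<in> space (P \<Otimes>\<^sub>M PP) \<rightarrow> (\<Pi>\<^sub>E i\<in>UNIV. space P)"
      by (auto simp: F_def space_pair_measure space_PiM)
  qed
  then show ?thesis by (simp add: eq)
qed

lemma split_nn:
  assumes g: "g \<in> borel_measurable PP"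
  shows "(\<integral>\<^sup>+ om. g om \<partial>PP) = (\<integral>\<^sup>+ om. \<integral>\<^sup>+ y. g (om(t := y)) \<partial>P \<partial>PP)"
proof -
  interpret P1: prob_space P by (rule P)
  interpret P2: prob_space PP by (rule PP_prob)
  interpret P12: pair_prob_space P PP ..
  have D: "distr (P \<Otimes>\<^sub>M PP) PP (\<lambda>(x, X). X(t := x)) = PP"
    using distr_pair_PiM_eq_PiM[of UNIV "\<lambda>_. P" t] P by simp
  have "(\<integral>\<^sup>+ om. g om \<partial>PP) = (\<integral>\<^sup>+ om. g om \<partial>(distr (P \<Otimes>\<^sub>M PP) PP (\<lambda>(x, X). X(t := x))))"
    by (simp add: D)
  also have "\<dots> = (\<integral>\<^sup>+ z. g ((\<lambda>(x, X). X(t := x)) z) \<partial>(P \<Otimes>\<^sub>M PP))"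
    by (rule nn_integral_distr[OF upd_meas]) (simp add: D g)
  also have "\<dots> = (\<integral>\<^sup>+ X. \<integral>\<^sup>+ x. g ((\<lambda>(x, X). X(t := x)) (x, X)) \<partial>P \<partial>PP)"
    by (rule P12.nn_integral_snd[symmetric]) (rule measurable_compose[OF upd_meas g])
  finally show ?thesis by simp
qed

lemma noise_j:
  assumes w: "w \<in> carrier_vec d" and y: "y \<in> space P" and j: "j<d"
  shows "noise Hm bm Hs bs w y $ j = lam j * (w$j - ws$j) - ((\<Sum>l\<in>{0..<d}. Hs y $$ (j,l) * w$l) - bs y $ j)"
  using w bcar[OF y] Hcar[OF y] Hm_car mult_diag[OF w j] bm_ws[OF j] j bm_dim
  by (simp add: noise_def scalar_prod_def algebra_simps)

lemma inner:
  assumes w: "w \<in> carrier_vec d" and j: "j<d"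
    and hyp: "(\<integral>\<xi>. noise Hm bm Hs bs w \<xi> $ j * noise Hm bm Hs bs w \<xi> $ j \<partial>P) = \<sigma>\<^sup>2 * Hm $$ (j,j)"
  shows "(\<integral>\<^sup>+ y. ennreal ((w$j - \<eta> * ((\<Sum>l\<in>{0..<d}. Hs y $$ (j,l) * w$l) - bs y $ j) - ws$j)\<^sup>2) \<partial>P)
         = ennreal ((1 - \<eta> * lam j)\<^sup>2 * (w$j - ws$j)\<^sup>2 + \<eta>\<^sup>2 * \<sigma>\<^sup>2 * lam j)"
proof -
  interpret P1: prob_space P by (rule P)
  define e where "e = w$j - ws$j"
  define N where "N y = lam j * e - ((\<Sum>l\<in>{0..<d}. w$l * Hs y $$ (j,l)) - bs y $ j)" for y
  have Nn: "noise Hm bm Hs bs w y $ j = N y" if "y \<in> space P" for y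
    using noise_j[OF w that j] by (simp add: N_def e_def mult.commute)
  have sqH: "sqint P (\<lambda>y. Hs y $$ (j,l))" if "l<d" for l using Hmeas Hint that j by (simp add: sqint_def)
  have sqb: "sqint P (\<lambda>y. bs y $ j)" using bmeas bint j by (simp add: sqint_def)
  have sqN: "sqint P N" unfolding N_def
    by (intro sqint_diff sqint_const[OF P] sqint_sum[OF P] sqint_cmult sqb) (auto intro: sqH)
  have intN: "integrable P N" by (rule sqint_integrable[OF P sqN])
  have intN2: "integrable P (\<lambda>y. N y * N y)" by (rule sqint_mult_integrable[OF sqN sqN])
  have iH: "integrable P (\<lambda>y. Hs y $$ (j,l))" if "l<d" for l using sqint_integrable[OF P sqH[OF that]] .
  have ib: "integrable P (\<lambda>y. bs y $ j)" using sqint_integrable[OF P sqb] .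
  have iS: "integrable P (\<lambda>y. \<Sum>l\<in>{0..<d}. w$l * Hs y $$ (j,l))"
    by (rule Bochner_Integration.integrable_sum) (auto intro!: integrable_mult_right iH)
  have "(\<integral>y. N y \<partial>P) = lam j * e - ((\<integral>y. (\<Sum>l\<in>{0..<d}. w$l * Hs y $$ (j,l)) \<partial>P) - (\<integral>y. bs y $ j \<partial>P))"
    unfolding N_def using iS ib by (simp add: integral_diff P1.prob_space)
  also have "(\<integral>y. (\<Sum>l\<in>{0..<d}. w$l * Hs y $$ (j,l)) \<partial>P) = (\<Sum>l\<in>{0..<d}. w$l * Hm $$ (j,l))"
    using iH Hm_idx j by (simp add: integral_sum)
  also have "\<dots> = (\<Sum>l\<in>{0..<d}. Hm $$ (j,l) * w$l)" by (simp add: mult.commute)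
  also have "\<dots> = lam j * w $ j" by (rule sum_diag[OF j])
  also have "(\<integral>y. bs y $ j \<partial>P) = lam j * ws $ j" using bm_idx[OF j] bm_ws[OF j] by simp
  finally have EN: "(\<integral>y. N y \<partial>P) = 0" by (simp add: e_def algebra_simps)
  have ENN: "(\<integral>y. N y * N y \<partial>P) = \<sigma>\<^sup>2 * lam j"
  proof -
    have "(\<integral>y. N y * N y \<partial>P) = (\<integral>\<xi>. noise Hm bm Hs bs w \<xi> $ j * noise Hm bm Hs bs w \<xi> $ j \<partial>P)"
      by (intro Bochner_Integration.integral_cong refl) (simp_all add: Nn)
    then show ?thesis using hyp by simp
  qed
  define A where "A = (1 - \<eta> * lam j) * e"
  have cong: "(w$j - \<eta> * ((\<Sum>l\<in>{0..<d}. Hs y $$ (j,l) * w$l) - bs y $ j) - ws$j)\<^sup>2 = (A + \<eta> * N y)\<^sup>2" for y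
  proof -
    have "(\<Sum>l\<in>{0..<d}. Hs y $$ (j,l) * w$l) = (\<Sum>l\<in>{0..<d}. w$l * Hs y $$ (j,l))" by (simp add: mult.commute)
    then show ?thesis by (simp add: A_def N_def e_def algebra_simps)
  qed
  have sqA: "sqint P (\<lambda>y. A + \<eta> * N y)" by (intro sqint_add sqint_const[OF P] sqint_cmult sqN)
  have intA: "integrable P (\<lambda>y. (A + \<eta> * N y)\<^sup>2)" using sqA by (simp add: sqint_def)
  have "(\<integral>\<^sup>+ y. ennreal ((w$j - \<eta> * ((\<Sum>l\<in>{0..<d}. Hs y $$ (j,l) * w$l) - bs y $ j) - ws$j)\<^sup>2) \<partial>P)
      = (\<integral>\<^sup>+ y. ennreal ((A + \<eta> * N y)\<^sup>2) \<partial>P)" by (simp only: cong)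
  also have "\<dots> = ennreal (\<integral>y. (A + \<eta> * N y)\<^sup>2 \<partial>P)"
    by (rule nn_integral_eq_integral[OF intA]) simp
  also have "(\<integral>y. (A + \<eta> * N y)\<^sup>2 \<partial>P) = (\<integral>y. A\<^sup>2 + (2 * A * \<eta>) * N y + \<eta>\<^sup>2 * (N y * N y) \<partial>P)"
    by (intro Bochner_Integration.integral_cong refl) (auto simp: power2_eq_square algebra_simps)
  also have "\<dots> = A\<^sup>2 + (2 * A * \<eta>) * (\<integral>y. N y \<partial>P) + \<eta>\<^sup>2 * (\<integral>y. N y * N y \<partial>P)"
    using intN intN2 by (simp add: integral_add P1.prob_space)
  also have "\<dots> = (1 - \<eta> * lam j)\<^sup>2 * (w$j - ws$j)\<^sup>2 + \<eta>\<^sup>2 * \<sigma>\<^sup>2 * lam j"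
    unfolding EN ENN A_def e_def by (simp add: power_mult_distrib)
  finally show ?thesis .
qed

lemma rec_step:
  assumes j: "j < d"
    and hyp: "eta t = 0 \<or> (AE om in PP. \<forall>i<d. \<forall>j<d. (\<integral>\<xi>. noise Hm bm Hs bs (sgd Hs bs eta w0 t om) \<xi> $ i * noise Hm bm Hs bs (sgd Hs bs eta w0 t om) \<xi> $ j \<partial>P) = \<sigma>\<^sup>2 * Hm $$ (i,j))"
  shows "(\<integral>\<^sup>+ om. ennreal ((sgd Hs bs eta w0 (Suc t) om $ j - ws $ j)\<^sup>2) \<partial>PP)
       = ennreal ((1 - eta t * lam j)\<^sup>2) * (\<integral>\<^sup>+ om. ennreal ((sgd Hs bs eta w0 t om $ j - ws $ j)\<^sup>2) \<partial>PP) + ennreal ((eta t)\<^sup>2 * \<sigma>\<^sup>2 * lam j)"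
proof -
  interpret P2: prob_space PP by (rule PP_prob)
  have [measurable]: "(\<lambda>om. sgd Hs bs eta w0 t om $ j) \<in> borel_measurable PP" by (rule W_meas[OF j])
  have [measurable]: "(\<lambda>om. sgd Hs bs eta w0 (Suc t) om $ j) \<in> borel_measurable PP" by (rule W_meas[OF j])
  let ?E = "\<lambda>om. ennreal ((sgd Hs bs eta w0 t om $ j - ws $ j)\<^sup>2)"
  have c: "(eta t)\<^sup>2 * \<sigma>\<^sup>2 * lam j \<ge> 0" using lam_pos[OF j] by simp
  have R: "(\<integral>\<^sup>+ om. ennreal ((1 - eta t * lam j)\<^sup>2 * (sgd Hs bs eta w0 t om $ j - ws $ j)\<^sup>2 + (eta t)\<^sup>2 * \<sigma>\<^sup>2 * lam j) \<partial>PP)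
     = ennreal ((1 - eta t * lam j)\<^sup>2) * (\<integral>\<^sup>+ om. ?E om \<partial>PP) + ennreal ((eta t)\<^sup>2 * \<sigma>\<^sup>2 * lam j)"
  proof -
    have "(\<integral>\<^sup>+ om. ennreal ((1 - eta t * lam j)\<^sup>2 * (sgd Hs bs eta w0 t om $ j - ws $ j)\<^sup>2 + (eta t)\<^sup>2 * \<sigma>\<^sup>2 * lam j) \<partial>PP)
       = (\<integral>\<^sup>+ om. ennreal ((1 - eta t * lam j)\<^sup>2) * ?E om + ennreal ((eta t)\<^sup>2 * \<sigma>\<^sup>2 * lam j) \<partial>PP)"
      using c by (intro nn_integral_cong) (simp add: ennreal_plus ennreal_mult)
    also have "\<dots> = ennreal ((1 - eta t * lam j)\<^sup>2) * (\<integral>\<^sup>+ om. ?E om \<partial>PP) + ennreal ((eta t)\<^sup>2 * \<sigma>\<^sup>2 * lam j)"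
      by (simp add: nn_integral_add nn_integral_cmult P2.emeasure_space_1)
    finally show ?thesis .
  qed
  show ?thesis
  proof (cases "eta t = 0")
    case True
    have "(\<integral>\<^sup>+ om. ennreal ((sgd Hs bs eta w0 (Suc t) om $ j - ws $ j)\<^sup>2) \<partial>PP) = (\<integral>\<^sup>+ om. ?E om \<partial>PP)"
      by (intro nn_integral_cong) (simp add: W_step[OF _ j] True del: sgd.simps(2))
    then show ?thesis using True by simp
  next
    case False
    then have AE: "AE om in PP. \<forall>i<d. \<forall>j<d. (\<integral>\<xi>. noise Hm bm Hs bs (sgd Hs bs eta w0 t om) \<xi> $ i * noise Hm bm Hs bs (sgd Hs bs eta w0 t om) \<xi> $ j \<partial>P) = \<sigma>\<^sup>2 * Hm $$ (i,j)"
      using hyp by simp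
    have "(\<integral>\<^sup>+ om. ennreal ((sgd Hs bs eta w0 (Suc t) om $ j - ws $ j)\<^sup>2) \<partial>PP)
        = (\<integral>\<^sup>+ om. \<integral>\<^sup>+ y. ennreal ((sgd Hs bs eta w0 (Suc t) (om(t := y)) $ j - ws $ j)\<^sup>2) \<partial>P \<partial>PP)"
      by (rule split_nn) measurable
    also have "\<dots> = (\<integral>\<^sup>+ om. ennreal ((1 - eta t * lam j)\<^sup>2 * (sgd Hs bs eta w0 t om $ j - ws $ j)\<^sup>2 + (eta t)\<^sup>2 * \<sigma>\<^sup>2 * lam j) \<partial>PP)"
    proof (rule nn_integral_cong_AE)
      show "AE om in PP. (\<integral>\<^sup>+ y. ennreal ((sgd Hs bs eta w0 (Suc t) (om(t := y)) $ j - ws $ j)\<^sup>2) \<partial>P)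
          = ennreal ((1 - eta t * lam j)\<^sup>2 * (sgd Hs bs eta w0 t om $ j - ws $ j)\<^sup>2 + (eta t)\<^sup>2 * \<sigma>\<^sup>2 * lam j)"
      proof (rule AE_mp[OF AE AE_I2], rule impI)
        fix om assume om: "om \<in> space PP"
          and h: "\<forall>i<d. \<forall>j<d. (\<integral>\<xi>. noise Hm bm Hs bs (sgd Hs bs eta w0 t om) \<xi> $ i * noise Hm bm Hs bs (sgd Hs bs eta w0 t om) \<xi> $ j \<partial>P) = \<sigma>\<^sup>2 * Hm $$ (i,j)"
        have wc: "sgd Hs bs eta w0 t om \<in> carrier_vec d" using W_car[OF om] .
        have "(\<integral>\<^sup>+ y. ennreal ((sgd Hs bs eta w0 (Suc t) (om(t := y)) $ j - ws $ j)\<^sup>2) \<partial>P)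
           = (\<integral>\<^sup>+ y. ennreal ((sgd Hs bs eta w0 t om $ j - eta t * ((\<Sum>l\<in>{0..<d}. Hs y $$ (j,l) * sgd Hs bs eta w0 t om $ l) - bs y $ j) - ws $ j)\<^sup>2) \<partial>P)"
        proof (intro nn_integral_cong)
          fix y assume y: "y \<in> space P"
          have om': "om(t := y) \<in> space PP" using om y by (auto simp: space_PiM)
          show "ennreal ((sgd Hs bs eta w0 (Suc t) (om(t := y)) $ j - ws $ j)\<^sup>2)
              = ennreal ((sgd Hs bs eta w0 t om $ j - eta t * ((\<Sum>l\<in>{0..<d}. Hs y $$ (j,l) * sgd Hs bs eta w0 t om $ l) - bs y $ j) - ws $ j)\<^sup>2)"
            using W_step[OF om' j, of eta t] W_local[of t t eta om y] by simp
        qed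
        also have "\<dots> = ennreal ((1 - eta t * lam j)\<^sup>2 * (sgd Hs bs eta w0 t om $ j - ws $ j)\<^sup>2 + (eta t)\<^sup>2 * \<sigma>\<^sup>2 * lam j)"
          by (rule inner[OF wc j]) (use h j in auto)
        finally show "(\<integral>\<^sup>+ y. ennreal ((sgd Hs bs eta w0 (Suc t) (om(t := y)) $ j - ws $ j)\<^sup>2) \<partial>P)
          = ennreal ((1 - eta t * lam j)\<^sup>2 * (sgd Hs bs eta w0 t om $ j - ws $ j)\<^sup>2 + (eta t)\<^sup>2 * \<sigma>\<^sup>2 * lam j)" .
      qed
    qed
    also have "\<dots> = ennreal ((1 - eta t * lam j)\<^sup>2) * (\<integral>\<^sup>+ om. ?E om \<partial>PP) + ennreal ((eta t)\<^sup>2 * \<sigma>\<^sup>2 * lam j)"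
      by (rule R)
    finally show ?thesis .
  qed
qed

lemma nn_u:
  assumes j: "j < d" and e0: "eta 0 = 0"
    and hyp: "\<forall>t\<in>{1..T}. AE om in PP. \<forall>i<d. \<forall>j<d. (\<integral>\<xi>. noise Hm bm Hs bs (sgd Hs bs eta w0 t om) \<xi> $ i * noise Hm bm Hs bs (sgd Hs bs eta w0 t om) \<xi> $ j \<partial>P) = \<sigma>\<^sup>2 * Hm $$ (i,j)"
  shows "t \<le> Suc T \<Longrightarrow> (\<integral>\<^sup>+ om. ennreal ((sgd Hs bs eta w0 t om $ j - ws $ j)\<^sup>2) \<partial>PP) = ennreal (uu eta (lam j) (\<sigma>\<^sup>2) ((w0$j - ws$j)\<^sup>2) t)"
proof (induction t)
  case 0
  interpret P2: prob_space PP by (rule PP_prob)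
  show ?case by (simp add: P2.emeasure_space_1)
next
  case (Suc t)
  have h: "eta t = 0 \<or> (AE om in PP. \<forall>i<d. \<forall>j<d. (\<integral>\<xi>. noise Hm bm Hs bs (sgd Hs bs eta w0 t om) \<xi> $ i * noise Hm bm Hs bs (sgd Hs bs eta w0 t om) \<xi> $ j \<partial>P) = \<sigma>\<^sup>2 * Hm $$ (i,j))"
  proof (cases t)
    case 0 then show ?thesis using e0 by simp
  next
    case (Suc t')
    then have tin: "t \<in> {1..T}" using Suc.prems by simp
    show ?thesis using bspec[OF hyp tin] by blast
  qed
  have unn: "uu eta (lam j) (\<sigma>\<^sup>2) ((w0$j - ws$j)\<^sup>2) t \<ge> 0" using lam_pos[OF j] by (intro uu_nonneg) auto
  have c: "(eta t)\<^sup>2 * \<sigma>\<^sup>2 * lam j \<ge> 0" using lam_pos[OF j] by simp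
  show ?case using rec_step[OF j h] Suc.IH Suc.prems unn c by (simp add: ennreal_mult ennreal_plus)
qed

lemma loss_integral:
  assumes nn: "\<And>j. j<d \<Longrightarrow> (\<integral>\<^sup>+ om. ennreal ((sgd Hs bs eta w0 t om $ j - ws $ j)\<^sup>2) \<partial>PP) = ennreal (U j)"
    and U: "\<And>j. j<d \<Longrightarrow> U j \<ge> 0"
  shows "(\<integral>om. fobj Hm bm (sgd Hs bs eta w0 t om) - fobj Hm bm ws \<partial>PP) = (\<Sum>j<d. lam j * U j) / 2"
proof -
  have m: "(\<lambda>om. (sgd Hs bs eta w0 t om $ j - ws $ j)\<^sup>2) \<in> borel_measurable PP" if "j<d" for j
    using W_meas[OF that] by measurable
  have ij: "integrable PP (\<lambda>om. (sgd Hs bs eta w0 t om $ j - ws $ j)\<^sup>2)" if "j<d" for j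
    by (rule integrableI_nn_integral_finite[OF m[OF that] _ nn[OF that]]) simp
  have vj: "(\<integral>om. (sgd Hs bs eta w0 t om $ j - ws $ j)\<^sup>2 \<partial>PP) = U j" if "j<d" for j
    using integral_eq_nn_integral[OF m[OF that]] nn[OF that] U[OF that] by simp
  have "(\<integral>om. fobj Hm bm (sgd Hs bs eta w0 t om) - fobj Hm bm ws \<partial>PP)
      = (\<integral>om. (\<Sum>j<d. lam j * (sgd Hs bs eta w0 t om $ j - ws $ j)\<^sup>2) / 2 \<partial>PP)"
    by (rule Bochner_Integration.integral_cong[OF refl]) (simp add: fobj_diff W_car)
  also have "\<dots> = (\<Sum>j<d. lam j * (\<integral>om. (sgd Hs bs eta w0 t om $ j - ws $ j)\<^sup>2 \<partial>PP)) / 2"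
    using ij by (simp add: integral_sum)
  also have "\<dots> = (\<Sum>j<d. lam j * U j) / 2" using vj by simp
  finally show ?thesis .
qed




end



lemma sq_le_pow2: "4 \<le> k \<Longrightarrow> k * k \<le> (2::nat) ^ k"
proof (induction k rule: dec_induct)
  case base then show ?case by simp
next
  case (step k)
  have "2 * k + 1 \<le> 4 * k" using step(1) by simp
  also have "4 * k \<le> k * k" using step(1) by (intro mult_le_mono1)
  finally have "Suc k * Suc k \<le> 2 * (k * k)" by simp
  also have "\<dots> \<le> 2 * 2 ^ k" using step(3) by simp
  finally show ?case by simp
qed

lemma main:
  fixes d :: nat and P :: "'s measure" and Hs :: "'s \<Rightarrow> real mat" and bs :: "'s \<Rightarrow> real vec"
    and w0 :: "real vec" and \<sigma> :: real and eta1 :: real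
  assumes A1: "prob_space P"
    and A2: "\<forall>\<xi>\<in>space P. Hs \<xi> \<in> carrier_mat d d \<and> symmetric_mat (Hs \<xi>) \<and> bs \<xi> \<in> carrier_vec d"
    and A3: "\<forall>i<d. \<forall>j<d. (\<lambda>\<xi>. Hs \<xi> $$ (i,j)) \<in> borel_measurable P \<and>
                    integrable P (\<lambda>\<xi>. (Hs \<xi> $$ (i,j))\<^sup>2)"
    and A4: "\<forall>i<d. (\<lambda>\<xi>. bs \<xi> $ i) \<in> borel_measurable P \<and> integrable P (\<lambda>\<xi>. (bs \<xi> $ i)\<^sup>2)"
    and A5: "w0 \<in> carrier_vec d"
    and A6: "pos_def_mat d (H_mean P Hs d)"
    and A7: "0 < eta1"
    and A8: "diagonal_mat (H_mean P Hs d)"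
  shows "\<exists>T0::nat. \<forall>(T::nat) (k::nat).
         T = 2 ^ k \<and> 0 < k \<and> k dvd T \<and> T0 \<le> T \<and>
         (\<forall>t\<in>{1..T}. AE om in PiM UNIV (\<lambda>_. P).
            \<forall>i<d. \<forall>j<d.
              (\<integral>\<xi>. noise (H_mean P Hs d) (b_mean P bs d) Hs bs
                       (sgd Hs bs (step_decay eta1 T k) w0 t om) \<xi> $ i *
                     noise (H_mean P Hs d) (b_mean P bs d) Hs bs
                       (sgd Hs bs (step_decay eta1 T k) w0 t om) \<xi> $ j \<partial>P)
              = \<sigma>\<^sup>2 * H_mean P Hs d $$ (i,j))
         \<longrightarrow>
         (\<integral>om. fobj (H_mean P Hs d) (b_mean P bs d) (sgd Hs bs (step_decay eta1 T k) w0 (T + 1) om)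
               - fobj (H_mean P Hs d) (b_mean P bs d) (wstar d (H_mean P Hs d) (b_mean P bs d))
            \<partial>PiM UNIV (\<lambda>_. P))
         \<ge> exp (-8) / 8 * (real d * \<sigma>\<^sup>2 / real T * log 2 (real T))"
proof -
  interpret sgdloc d P Hs bs w0 \<sigma>
  proof (rule sgdloc.intro)
    show "prob_space P" by (rule A1)
    show "\<And>\<xi>. \<xi> \<in> space P \<Longrightarrow> Hs \<xi> \<in> carrier_mat d d" using A2 by blast
    show "\<And>\<xi>. \<xi> \<in> space P \<Longrightarrow> bs \<xi> \<in> carrier_vec d" using A2 by blast
    show "\<And>i j. i<d \<Longrightarrow> j<d \<Longrightarrow> (\<lambda>\<xi>. Hs \<xi> $$ (i,j)) \<in> borel_measurable P" using A3 by blast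
    show "\<And>i j. i<d \<Longrightarrow> j<d \<Longrightarrow> integrable P (\<lambda>\<xi>. (Hs \<xi> $$ (i,j))\<^sup>2)" using A3 by blast
    show "\<And>i. i<d \<Longrightarrow> (\<lambda>\<xi>. bs \<xi> $ i) \<in> borel_measurable P" using A4 by blast
    show "\<And>i. i<d \<Longrightarrow> integrable P (\<lambda>\<xi>. (bs \<xi> $ i)\<^sup>2)" using A4 by blast
    show "w0 \<in> carrier_vec d" by (rule A5)
    show "pos_def_mat d (H_mean P Hs d)" by (rule A6)
    show "diagonal_mat (H_mean P Hs d)" by (rule A8)
  qed
  define a where "a j = eta1 * lam j" for j
  have apos: "a j > 0" if "j < d" for j using lam_pos[OF that] A7 by (simp add: a_def)
  have anb: "0 \<le> 4 / a x + 2 * a x" if "x < d" for x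
  proof -
    have ax: "a x > 0" using apos that by simp
    then have "0 \<le> 4 / a x" "0 \<le> 2 * a x" by simp_all
    then show ?thesis by linarith
  qed
  define S where "S = (\<Sum>j<d. 4 / a j + 2 * a j)"
  define K where "K = 4 + nat \<lceil>S\<rceil>"
  show ?thesis
  proof (rule exI[of _ "2^K"], intro allI impI, elim conjE)
    fix T k :: nat
    assume T: "T = 2 ^ k" and k0: "0 < k" and kdvd: "k dvd T" and TK: "2 ^ K \<le> T"
      and hyp: "\<forall>t\<in>{1..T}. AE om in PiM UNIV (\<lambda>_. P).
            \<forall>i<d. \<forall>j<d.
              (\<integral>\<xi>. noise (H_mean P Hs d) (b_mean P bs d) Hs bs
                       (sgd Hs bs (step_decay eta1 T k) w0 t om) \<xi> $ i *
                     noise (H_mean P Hs d) (b_mean P bs d) Hs bs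
                       (sgd Hs bs (step_decay eta1 T k) w0 t om) \<xi> $ j \<partial>P)
              = \<sigma>\<^sup>2 * H_mean P Hs d $$ (i,j)"
    let ?eta = "step_decay eta1 T k"
    have kK: "K \<le> k" using TK T by simp
    have k4: "4 \<le> k" using kK by (simp add: K_def)
    have kj: "4 / a j + 2 * a j \<le> real k" if j: "j < d" for j
    proof -
      have s1: "4 / a j + 2 * a j \<le> S" unfolding S_def
        by (rule member_le_sum[of j "{..<d}" "\<lambda>j. 4 / a j + 2 * a j"]) (use j anb in auto)
      have s2: "S \<le> real (nat \<lceil>S\<rceil>)" by linarith
      have s3: "nat \<lceil>S\<rceil> \<le> k" using kK unfolding K_def by linarith
      have s4: "real (nat \<lceil>S\<rceil>) \<le> real k" using s3 by (simp only: of_nat_le_iff)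
      show ?thesis using s1 s2 s4 by linarith
    qed
    define m where "m = T div k"
    have Tkm: "T = k * m" using kdvd by (simp add: m_def)
    have kk: "k * k \<le> k * m" using sq_le_pow2[OF k4] T Tkm by simp
    have mk: "k \<le> m" using kk k0 by simp
    have m4: "4 \<le> m" using mk k4 by simp
    have mpos: "real m > 0" using m4 by simp
    have e0: "?eta 0 = 0" by (simp add: step_decay_def)
    define U where "U j = uu ?eta (lam j) (\<sigma>\<^sup>2) ((w0$j - ws$j)\<^sup>2) (T + 1)" for j
    have Unn: "U j \<ge> 0" if "j < d" for j unfolding U_def using lam_pos[OF that] by (intro uu_nonneg) auto
    have NN: "(\<integral>\<^sup>+ om. ennreal ((sgd Hs bs ?eta w0 (T+1) om $ j - ws $ j)\<^sup>2) \<partial>PP) = ennreal (U j)"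
      if "j < d" for j
      unfolding U_def by (rule nn_u[OF that e0 hyp]) simp
    have L: "(\<integral>om. fobj Hm bm (sgd Hs bs ?eta w0 (T+1) om) - fobj Hm bm ws \<partial>PP) = (\<Sum>j<d. lam j * U j) / 2"
      by (rule loss_integral[OF NN Unn])
    have LB: "lam j * U j \<ge> exp (-8) * \<sigma>\<^sup>2 / (4 * m)" if j: "j < d" for j
    proof -
      define v where "v t = lam j * uu ?eta (lam j) (\<sigma>\<^sup>2) ((w0$j - ws$j)\<^sup>2) t" for t
      define h where "h t = ?eta t * lam j" for t
      have rec: "v (Suc t) = (1 - h t)\<^sup>2 * v t + \<sigma>\<^sup>2 * (h t)\<^sup>2" for t
        by (simp add: v_def h_def power2_eq_square algebra_simps)
      have v0: "v 0 \<ge> 0" using lam_pos[OF j] by (simp add: v_def)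
      have hdef: "h (l*m + 1 + i) = a j / 2^l" if "l < k" "i < m" for l i
      proof -
        have "(l * m + i) div m = l" using that m4 by simp
        then show ?thesis using that by (simp add: h_def step_decay_def a_def m_def[symmetric])
      qed
      have akj: "4 / a j + 2 * a j \<le> real k" by (rule kj[OF j])
      have aj: "a j > 0" by (rule apos[OF j])
      have "4 / a j \<le> real k" using akj aj by simp
      then have ak4: "4 \<le> a j * real k" using aj by (simp add: field_simps)
      have "a j * real k \<le> a j * real m" using mk aj by simp
      then have am: "a j * real m \<ge> 1" using ak4 by linarith
      have "real (k * m) = real (2 ^ k)" using T Tkm by simp
      then have mkr: "real m * real k = 2 ^ k" by (simp add: mult.commute)
      have p2: "(2::real) ^ k = 2 * 2 ^ (k - 1)" using k0 by (cases k) auto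
      have "4 / a j > 0" using aj by simp
      then have "2 * a j < real k" using akj by linarith
      then have "real m * (2 * a j) < real m * real k" using mpos by simp
      then have amk: "real m * a j < 2 ^ (k - 1)" using mkr p2 by simp
      have "v (k * m + 1) \<ge> exp (-8) * \<sigma>\<^sup>2 / (4 * m)"
        by (rule coord_lower[where v=v and h=h, OF rec v0 _ aj hdef m4 am _ amk]) (use k0 in auto)
      then show ?thesis using Tkm by (simp add: v_def U_def)
    qed
    have "(\<Sum>j<d. exp (-8) * \<sigma>\<^sup>2 / (4 * m)) \<le> (\<Sum>j<d. lam j * U j)"
      by (rule sum_mono) (use LB in auto)
    moreover have "(\<Sum>j<d. exp (-8) * \<sigma>\<^sup>2 / (4 * m)) = real d * (exp (-8) * \<sigma>\<^sup>2 / (4 * m))" by simp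
    ultimately have "real d * (exp (-8) * \<sigma>\<^sup>2 / (4 * m)) \<le> (\<Sum>j<d. lam j * U j)" by (simp only:)
    then have F1: "real d * (exp (-8) * \<sigma>\<^sup>2 / (4 * m)) / 2 \<le> (\<Sum>j<d. lam j * U j) / 2" by (rule divide_right_mono) simp
    have F2: "exp (-8) / 8 * (real d * \<sigma>\<^sup>2 / real T * log 2 (real T)) = real d * (exp (-8) * \<sigma>\<^sup>2 / (4 * m)) / 2"
    proof -
      have "log 2 (real T) = real k" using T by simp
      then show ?thesis using Tkm k0 mpos by (simp add: field_simps)
    qed
    show "(\<integral>om. fobj (H_mean P Hs d) (b_mean P bs d) (sgd Hs bs (step_decay eta1 T k) w0 (T + 1) om)
               - fobj (H_mean P Hs d) (b_mean P bs d) (wstar d (H_mean P Hs d) (b_mean P bs d))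
            \<partial>PiM UNIV (\<lambda>_. P))
         \<ge> exp (-8) / 8 * (real d * \<sigma>\<^sup>2 / real T * log 2 (real T))"
      unfolding F2 L using F1 .
  qed
qed



theorem theorem2:
  "\<exists>c::real. c > 0 \<and>
    (\<forall>(d::nat) (P::'s measure) (Hs::'s \<Rightarrow> real mat) (bs::'s \<Rightarrow> real vec)
       (w0::real vec) (\<sigma>::real) (eta1::real).
      prob_space P \<and>
      (\<forall>\<xi>\<in>space P. Hs \<xi> \<in> carrier_mat d d \<and> symmetric_mat (Hs \<xi>) \<and> bs \<xi> \<in> carrier_vec d) \<and>
      (\<forall>i<d. \<forall>j<d. (\<lambda>\<xi>. Hs \<xi> $$ (i,j)) \<in> borel_measurable P \<and>
                    integrable P (\<lambda>\<xi>. (Hs \<xi> $$ (i,j))\<^sup>2)) \<and>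
      (\<forall>i<d. (\<lambda>\<xi>. bs \<xi> $ i) \<in> borel_measurable P \<and> integrable P (\<lambda>\<xi>. (bs \<xi> $ i)\<^sup>2)) \<and>
      w0 \<in> carrier_vec d \<and>
      pos_def_mat d (H_mean P Hs d) \<and>
      0 < eta1 \<and> eta1 \<le> 1 / lambda_max (H_mean P Hs d) \<and>
      diagonal_mat (H_mean P Hs d) \<and>
      (\<forall>j<d. H_mean P Hs d $$ (j,j) *
               (w0 $ j - wstar d (H_mean P Hs d) (b_mean P bs d) $ j)\<^sup>2 \<noteq> 0)
      \<longrightarrow>
      (\<exists>T0::nat. \<forall>(T::nat) (k::nat).
         T = 2 ^ k \<and> 0 < k \<and> k dvd T \<and> T0 \<le> T \<and>
         (\<forall>t\<in>{1..T}. AE om in PiM UNIV (\<lambda>_. P).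
            \<forall>i<d. \<forall>j<d.
              (\<integral>\<xi>. noise (H_mean P Hs d) (b_mean P bs d) Hs bs
                       (sgd Hs bs (step_decay eta1 T k) w0 t om) \<xi> $ i *
                     noise (H_mean P Hs d) (b_mean P bs d) Hs bs
                       (sgd Hs bs (step_decay eta1 T k) w0 t om) \<xi> $ j \<partial>P)
              = \<sigma>\<^sup>2 * H_mean P Hs d $$ (i,j))
         \<longrightarrow>
         (\<integral>om. fobj (H_mean P Hs d) (b_mean P bs d) (sgd Hs bs (step_decay eta1 T k) w0 (T + 1) om)
               - fobj (H_mean P Hs d) (b_mean P bs d) (wstar d (H_mean P Hs d) (b_mean P bs d))
            \<partial>PiM UNIV (\<lambda>_. P))
         \<ge> c * (real d * \<sigma>\<^sup>2 / real T * log 2 (real T))))"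
  apply (rule exI[of _ "exp (-8) / 8"])
  apply (intro conjI allI impI)
   apply simp
  apply (elim conjE)
  apply (rule main)
         apply assumption+
  done

end
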